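(* Let $f:[0,\infty)\to[0,\infty)$ be continuously differentiable with $f>0$ on $[t_0,\infty)$ for some $t_0\ge0$ and $f\in C^2([t_0,\infty))$, let $g=\log f$ on $[t_0,\infty)$, and assume condition (H1) of the context. Then for every $M>0$, $$\lim_{t\to\infty}\sup_{-M\le y\le M}\left|\frac{g'\big(t+\frac{y}{g'(t)}\big)}{g'(t)}-1\right|=0.$$
   Context: Condition (H1): (i) $g'(t)>0$ and $g''(t)>0$ for all $t\ge t_0$, and there is a pair $(q,p)$ with either $q=1$ and $p\in(0,\infty]$, or $q\in(1,\infty)$ and $p\in(0,\infty)$, such that $\lim_{t\to\infty}\frac{g'(t)^2}{g(t)g''(t)}=q$ and $\lim_{t\to\infty}\frac{tg'(t)}{g(t)}=p$; (ii) if $q=1$, then $tg'(t)/g(t)$ is nondecreasing on $[t_0,\infty)$ and there exist $k\in\mathbb{N}$ and $\hat g\in C^2([t_0,\infty))$ with $f=\exp_k\circ\hat g$ and $\hat g'/\hat g$ nonincreasing on $[t_0,\infty)$ ($\exp_1=\exp$, $\exp_k=\exp_{k-1}\circ\exp$). *)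

theory Defs
  imports "HOL-Analysis.Analysis"
begin

definition exp_iter :: "nat \<Rightarrow> real \<Rightarrow> real" where
  "exp_iter k = (exp ^^ k)"

end

theory Submission
  imports Defs
begin


lemma mvt_within_aux:
  fixes u u' :: "real \<Rightarrow> real"
  assumes "t0 \<le> a" "a \<le> b"
    and d: "\<And>x. x \<ge> t0 \<Longrightarrow> (u has_real_derivative u' x) (at x within {t0..})"
  shows "\<exists>x\<in>{a..b}. u b - u a = u' x * (b - a)"
proof -
  have "\<exists>x\<in>{a..b}. u b - u a = (*) (u' x) (b - a)"
  proof (rule mvt_very_simple[OF assms(2)])
    fix x assume "a \<le> x" "x \<le> b"
    then have "(u has_real_derivative u' x) (at x within {a..b})"
      using d[of x] assms(1) by (auto intro: DERIV_subset)
    then show "(u has_derivative (*) (u' x)) (at x within {a..b})"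
      by (simp add: has_field_derivative_def)
  qed
  then show ?thesis by simp
qed

theorem lemma2p5:
  fixes f f' f'' g g' g'' :: "real \<Rightarrow> real" and t0 :: real
  assumes t0: "t0 \<ge> 0"
    and f_nonneg: "\<And>t. t \<ge> 0 \<Longrightarrow> f t \<ge> 0"
    and f_C1: "\<And>t. t \<ge> 0 \<Longrightarrow> (f has_real_derivative f' t) (at t within {0..})"
    and f'_cont: "continuous_on {0..} f'"
    and f_pos: "\<And>t. t \<ge> t0 \<Longrightarrow> f t > 0"
    and f_C2: "\<And>t. t \<ge> t0 \<Longrightarrow> (f' has_real_derivative f'' t) (at t within {t0..})"
    and f''_cont: "continuous_on {t0..} f''"
    and g_def: "\<And>t. t \<ge> t0 \<Longrightarrow> g t = ln (f t)"
    and g_deriv: "\<And>t. t \<ge> t0 \<Longrightarrow> (g has_real_derivative g' t) (at t within {t0..})"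
    and g'_deriv: "\<And>t. t \<ge> t0 \<Longrightarrow> (g' has_real_derivative g'' t) (at t within {t0..})"
    and H1_i: "\<And>t. t \<ge> t0 \<Longrightarrow> g' t > 0 \<and> g'' t > 0"
    and H1: "\<exists>(q::real) (p::ereal).
              ((q = 1 \<and> 0 < p) \<or> (q > 1 \<and> 0 < p \<and> p < \<infinity>)) \<and>
              ((\<lambda>t. g' t ^ 2 / (g t * g'' t)) \<longlongrightarrow> q) at_top \<and>
              ((\<lambda>t. ereal (t * g' t / g t)) \<longlongrightarrow> p) at_top \<and>
              (q = 1 \<longrightarrow>
                 mono_on {t0..} (\<lambda>t. t * g' t / g t) \<and>
                 (\<exists>(k::nat) gh gh' gh''. k \<ge> 1 \<and>
                    (\<forall>t\<ge>t0. (gh has_real_derivative gh' t) (at t within {t0..})) \<and>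
                    (\<forall>t\<ge>t0. (gh' has_real_derivative gh'' t) (at t within {t0..})) \<and>
                    continuous_on {t0..} gh'' \<and>
                    (\<forall>t\<ge>t0. f t = exp_iter k (gh t)) \<and>
                    antimono_on {t0..} (\<lambda>t. gh' t / gh t)))"
  shows "\<forall>M>0. ((\<lambda>t. SUP y\<in>{-M..M}. \<bar>g' (t + y / g' t) / g' t - 1\<bar>) \<longlongrightarrow> 0) at_top"
proof (intro allI impI)
  fix M :: real assume M: "M > 0"
  obtain q where Qlim: "((\<lambda>t. g' t ^ 2 / (g t * g'' t)) \<longlongrightarrow> q) at_top" and q: "q \<ge> 1"
    using H1 by force
  have g'mono: "g' a \<le> g' b" if ab: "t0 \<le> a" "a \<le> b" for a b
  proof -
    obtain x where x: "x \<in> {a..b}" "g' b - g' a = g'' x * (b - a)"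
      using mvt_within_aux[OF ab g'_deriv] by blast
    have "g'' x > 0" using H1_i[of x] x that by auto
    then have "g'' x * (b - a) \<ge> 0" using ab by simp
    then show ?thesis using x by linarith
  qed
  have glow: "g t \<ge> g t0 + g' t0 * (t - t0)" if tt: "t0 \<le> t" for t
  proof -
    obtain x where x: "x \<in> {t0..t}" "g t - g t0 = g' x * (t - t0)"
      using mvt_within_aux[OF order_refl tt g_deriv] by blast
    have "g' t0 \<le> g' x" using g'mono x by auto
    then have "g' t0 * (t - t0) \<le> g' x * (t - t0)" using tt by (simp add: mult_right_mono)
    then show ?thesis using x by linarith
  qed
  have c0: "g' t0 > 0" using H1_i by auto
  have gtop: "filterlim g at_top at_top"
    unfolding filterlim_at_top eventually_at_top_linorder
  proof (intro allI exI allI impI)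
    fix Z t assume t: "max t0 (t0 + (Z - g t0) / g' t0) \<le> t"
    then have "(Z - g t0) / g' t0 \<le> t - t0" by simp
    then have "Z - g t0 \<le> g' t0 * (t - t0)" using c0 by (simp add: field_simps)
    then show "Z \<le> g t" using glow[of t] t by simp
  qed
  have rlim: "((\<lambda>t. g'' t / g' t ^ 2) \<longlongrightarrow> 0) at_top"
  proof -
    have "((\<lambda>t. inverse (g t) * inverse (g' t ^ 2 / (g t * g'' t))) \<longlongrightarrow> 0 * inverse q) at_top"
      using q by (intro tendsto_intros tendsto_inverse_0_at_top gtop Qlim) auto
    moreover have "eventually (\<lambda>t. inverse (g t) * inverse (g' t ^ 2 / (g t * g'' t)) = g'' t / g' t ^ 2) at_top"
      using eventually_ge_at_top[of t0] filterlim_at_top_dense[THEN iffD1, OF gtop, rule_format, of 0]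
    proof eventually_elim
      case (elim t)
      then have "g' t > 0" "g'' t > 0" using H1_i by auto
      then show ?case using elim by (simp add: field_simps)
    qed
    ultimately show ?thesis using Lim_transform_eventually by fastforce
  qed
  have ud: "((\<lambda>x. inverse (g' x)) has_real_derivative - (g'' x / g' x ^ 2)) (at x within {t0..})"
    if "x \<ge> t0" for x
  proof -
    have "g' x \<noteq> 0" using H1_i that by (metis less_irrefl)
    from DERIV_inverse_fun[OF g'_deriv[OF that] this] show ?thesis
      by (simp add: divide_inverse power2_eq_square)
  qed
  show "((\<lambda>t. SUP y\<in>{-M..M}. \<bar>g' (t + y / g' t) / g' t - 1\<bar>) \<longlongrightarrow> 0) at_top"
  proof (rule tendstoI)
    fix e :: real assume e: "e > 0"
    define \<eta> where "\<eta> = min (1 / (2 * M)) (e / (4 * M))"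
    have eta: "\<eta> > 0" "\<eta> * M \<le> 1/2" "2 * (\<eta> * M) \<le> e / 2"
      using M e by (auto simp: \<eta>_def field_simps min_def)
    have "eventually (\<lambda>t. norm (g'' t / g' t ^ 2 - 0) < \<eta>) at_top"
      using tendstoD[OF rlim eta(1)] by (simp add: dist_norm)
    then obtain T0 where T0: "\<And>t. t \<ge> T0 \<Longrightarrow> \<bar>g'' t / g' t ^ 2\<bar> < \<eta>"
      unfolding eventually_at_top_linorder by auto
    define T where "T = max T0 t0"
    have lip: "\<bar>inverse (g' z) - inverse (g' x)\<bar> \<le> \<eta> * \<bar>z - x\<bar>" if "z \<ge> T" "x \<ge> T" for z x
    proof -
      have "norm (inverse (g' z) - inverse (g' x)) \<le> \<eta> * norm (z - x)"
      proof (rule field_differentiable_bound[where S="{T..}"])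
        fix w :: real assume w: "w \<in> {T..}"
        then show "((\<lambda>x. inverse (g' x)) has_field_derivative - (g'' w / g' w ^ 2)) (at w within {T..})"
          using ud[of w] by (auto simp: T_def intro: DERIV_subset)
        show "norm (- (g'' w / g' w ^ 2)) \<le> \<eta>" using T0[of w] w by (auto simp: T_def)
      qed (use that in auto)
      then show ?thesis by simp
    qed
    have "eventually (\<lambda>t. \<forall>y\<in>{-M..M}. \<bar>g' (t + y / g' t) / g' t - 1\<bar> \<le> e / 2) at_top"
      using eventually_ge_at_top[of "T + M / g' t0"]
    proof eventually_elim
      case (elim t)
      have tT: "t \<ge> T" using elim M c0 by (smt (verit) divide_pos_pos)
      have tt0: "t \<ge> t0" using tT by (simp add: T_def)
      have gt: "g' t \<ge> g' t0" using g'mono[OF order_refl tt0] .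
      show ?case
      proof
        fix y assume y: "y \<in> {-M..M}"
        define s where "s = y / g' t"
        have gtpos: "g' t > 0" using c0 gt by linarith
        have abs_s: "\<bar>s\<bar> \<le> M / g' t" using y gtpos by (auto simp: s_def abs_le_iff divide_right_mono)
        have "M / g' t \<le> M / g' t0" using M c0 gt by (simp add: frac_le)
        then have "t + s \<ge> T" using abs_s elim by (smt (verit))
        then have tsT: "t + s \<ge> T" .
        have gts: "g' (t + s) > 0" using H1_i[of "t + s"] tsT by (simp add: T_def)
        have "\<bar>inverse (g' (t + s)) - inverse (g' t)\<bar> \<le> \<eta> * \<bar>s\<bar>"
          using lip[OF tsT tT] by simp
        also have "\<dots> \<le> \<eta> * (M / g' t)" using abs_s eta using mult_left_mono[OF abs_s, of \<eta>] by simp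
        finally have D: "\<bar>inverse (g' (t + s)) - inverse (g' t)\<bar> \<le> (\<eta> * M) * inverse (g' t)"
          by (simp add: divide_inverse)
        define a where "a = g' t / g' (t + s)"
        have "a - 1 = (inverse (g' (t + s)) - inverse (g' t)) * g' t"
          using gtpos gts by (simp add: a_def field_simps)
        then have A: "\<bar>a - 1\<bar> \<le> \<eta> * M"
          using D gtpos by (simp add: abs_mult field_simps)
        then have apos: "a \<ge> 1/2" using eta by linarith
        have "g' (t + s) / g' t - 1 = (1 - a) / a" using gtpos gts by (simp add: a_def field_simps)
        then have "\<bar>g' (t + s) / g' t - 1\<bar> = \<bar>a - 1\<bar> / a" using apos by (simp add: abs_minus_commute)
        also have "\<dots> \<le> (\<eta> * M) / (1/2)" using A apos by (intro frac_le) auto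
        also have "\<dots> \<le> e / 2" using eta by simp
        finally show "\<bar>g' (t + y / g' t) / g' t - 1\<bar> \<le> e / 2" by (simp add: s_def)
      qed
    qed
    then show "eventually (\<lambda>t. dist (SUP y\<in>{-M..M}. \<bar>g' (t + y / g' t) / g' t - 1\<bar>) 0 < e) at_top"
    proof eventually_elim
      case (elim t)
      have ne: "{-M..M} \<noteq> {}" using M by simp
      have le: "(SUP y\<in>{-M..M}. \<bar>g' (t + y / g' t) / g' t - 1\<bar>) \<le> e / 2"
        using elim by (intro cSUP_least ne) auto
      have "0 \<le> \<bar>g' (t + 0 / g' t) / g' t - 1\<bar>" by simp
      also have "\<dots> \<le> (SUP y\<in>{-M..M}. \<bar>g' (t + y / g' t) / g' t - 1\<bar>)"
        using elim M by (intro cSUP_upper bdd_aboveI2[where M="e/2"]) auto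
      finally show ?case using le e by (simp add: dist_norm)
    qed
  qed
qed

end
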